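(* Let $\mathcal{P}\subseteq\mathcal{S}\subseteq\mathcal{T}$ be group properties. Suppose that for every nonempty set of the form $\mathcal{B}=\{G\in\mathcal{S}: \forall i,j\le k\ (G(i,j)=m_{i,j})\}$ (with $k\in\mathbb{N}$, $m_{i,j}\in\mathbb{N}$) there exist $G_0\in\mathcal{B}$, $H\in\mathcal{P}$ and a group homomorphism $\varphi:(\mathbb{N},G_0)\to(\mathbb{N},H)$ such that $\varphi$ restricted to $\operatorname{supp}\mathcal{B}=\{1,\dots,k\}\cup\{m_{i,j}: i,j\le k\}$ is injective. Then $\mathcal{P}$ is dense in $\mathcal{S}$.
   Context: Let $\mathbb{N}^{\mathbb{N}\times\mathbb{N}}$ be the space of functions $\mathbb{N}\times\mathbb{N}\to\mathbb{N}$ with the product of discrete topologies. Let $\mathcal{A}=\{G\in\mathbb{N}^{\mathbb{N}\times\mathbb{N}}: G \text{ is an abelian group operation on } \mathbb{N} \text{ with identity element } 0\}$ and $\mathcal{T}=\{G\in\mathcal{A}: (\mathbb{N},G)\text{ is torsion-free}\}$, with the subspace topology. A set $\mathcal{P}\subseteq\mathcal{T}$ is a group property if it is isomorphism invariant: for any $G\in\mathcal{T}$, if $(\mathbb{N},G)$ is isomorphic to $(\mathbb{N},H)$ for some $H\in\mathcal{P}$, then $G\in\mathcal{P}$. *)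

theory Defs
  imports "HOL-Analysis.Analysis" "HOL-Algebra.Group"
begin

definition grp :: "(nat \<times> nat \<Rightarrow> nat) \<Rightarrow> nat monoid" where
  "grp G = \<lparr>carrier = UNIV, mult = (\<lambda>a b. G (a, b)), one = 0\<rparr>"

definition A_ops :: "(nat \<times> nat \<Rightarrow> nat) set" where
  "A_ops = {G. comm_group (grp G)}"

definition T_ops :: "(nat \<times> nat \<Rightarrow> nat) set" where
  "T_ops = {G \<in> A_ops. \<forall>a n. a \<noteq> 0 \<and> n > 0 \<longrightarrow> a [^]\<^bsub>grp G\<^esub> (n::nat) \<noteq> (0::nat)}"

definition group_property :: "(nat \<times> nat \<Rightarrow> nat) set \<Rightarrow> bool" where
  "group_property P \<longleftrightarrow> P \<subseteq> T_ops \<and>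
     (\<forall>G \<in> T_ops. \<forall>H \<in> P. grp G \<cong> grp H \<longrightarrow> G \<in> P)"

definition op_topology :: "(nat \<times> nat \<Rightarrow> nat) topology" where
  "op_topology = product_topology (\<lambda>_. discrete_topology UNIV) UNIV"

end

theory Submission
  imports Defs "HOL-Library.Infinite_Set"
begin

lemma nbhd_lemma:
  assumes "openin op_topology U" "K \<in> U"
  shows "\<exists>k::nat. \<forall>H. (\<forall>i\<le>k. \<forall>j\<le>k. H (i,j) = K (i,j)) \<longrightarrow> H \<in> U"
proof -
  obtain V where V: "finite {i \<in> UNIV. V i \<noteq> topspace (discrete_topology (UNIV::nat set))}"
     "K \<in> Pi\<^sub>E UNIV V" "Pi\<^sub>E UNIV V \<subseteq> U"
    using assms unfolding op_topology_def openin_product_topology_alt by blast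
  define F where "F = {i. V i \<noteq> UNIV}"
  have fF: "finite F" using V(1) by (simp add: F_def)
  define k where "k = Max (fst ` F \<union> snd ` F \<union> {0})"
  have kb: "\<And>p. p \<in> F \<Longrightarrow> fst p \<le> k \<and> snd p \<le> k"
    unfolding k_def using fF by (auto intro: Max_ge)
  show ?thesis
  proof (intro exI allI impI)
    fix H assume agr: "\<forall>i\<le>k. \<forall>j\<le>k. H (i,j) = K (i,j)"
    have "H \<in> Pi\<^sub>E UNIV V"
    proof (simp add: PiE_def Pi_def, intro allI)
      fix p show "H p \<in> V p"
      proof (cases "p \<in> F")
        case True
        obtain a b where p: "p = (a,b)" by fastforce
        with kb[OF True] agr have "H p = K p" by auto
        moreover have "K p \<in> V p" using V(2) by auto
        ultimately show ?thesis by simp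
      next
        case False then show ?thesis by (simp add: F_def)
      qed
    qed
    then show "H \<in> U" using V(3) by blast
  qed
qed

lemma extend_bij:
  fixes \<phi> :: "nat \<Rightarrow> nat"
  assumes "finite D" "inj_on \<phi> D"
  shows "\<exists>\<psi>. bij \<psi> \<and> (\<forall>x\<in>D. \<psi> x = \<phi> x)"
proof -
  have i1: "infinite (UNIV - D)" using assms(1) by (simp add: Diff_infinite_finite)
  have i2: "infinite (UNIV - \<phi> ` D)" using assms(1) by (simp add: Diff_infinite_finite)
  define e1 where "e1 = enumerate (UNIV - D)"
  define e2 where "e2 = enumerate (UNIV - \<phi> ` D)"
  have b1: "bij_betw e1 UNIV (UNIV - D)" using bij_enumerate[OF i1] e1_def by simp
  have b2: "bij_betw e2 UNIV (UNIV - \<phi> ` D)" using bij_enumerate[OF i2] e2_def by simp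
  have b1': "bij_betw (inv_into UNIV e1) (UNIV - D) UNIV" using bij_betw_inv_into[OF b1] .
  have g: "bij_betw (e2 \<circ> inv_into UNIV e1) (UNIV - D) (UNIV - \<phi> ` D)"
    using bij_betw_trans[OF b1' b2] .
  have f: "bij_betw \<phi> D (\<phi> ` D)" using assms(2) by (simp add: bij_betw_imageI)
  have "bij_betw (\<lambda>x. if x \<in> D then \<phi> x else (e2 \<circ> inv_into UNIV e1) x) (D \<union> (UNIV - D)) (\<phi> ` D \<union> (UNIV - \<phi> ` D))"
    by (rule bij_betw_disjoint_Un[OF f g]) auto
  then have "bij (\<lambda>x. if x \<in> D then \<phi> x else (e2 \<circ> inv_into UNIV e1) x)" by simp
  then show ?thesis by (intro exI[of _ "(\<lambda>x. if x \<in> D then \<phi> x else (e2 \<circ> inv_into UNIV e1) x)"]) auto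
qed

lemma transport:
  assumes K: "K \<in> T_ops" and b: "bij \<psi>" and z: "\<psi> 0 = 0"
    and H'def: "H' = (\<lambda>(a,b). inv_into UNIV \<psi> (K (\<psi> a, \<psi> b)))"
  shows "H' \<in> T_ops \<and> grp H' \<cong> grp K"
proof -
  have si: "\<And>x. \<psi> (inv_into UNIV \<psi> x) = x" using b by (simp add: bij_is_surj surj_f_inv_f)
  have is': "\<And>x. inv_into UNIV \<psi> (\<psi> x) = x" using b by (simp add: bij_is_inj)
  have iz: "inv_into UNIV \<psi> 0 = 0" using is'[of 0] z by simp
  have cg: "comm_group (grp K)" using K unfolding T_ops_def A_ops_def by simp
  have Gas: "\<And>x y z. K (K (x,y), z) = K (x, K (y,z))"
    using comm_group.axioms(2)[OF cg] monoid.m_assoc[of "grp K"] 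
    by (simp add: grp_def comm_group_def group_def)
  have Gc: "\<And>x y. K (x,y) = K (y,x)"
    using comm_monoid.m_comm[of "grp K"] cg by (simp add: grp_def comm_group_def)
  have Gl: "\<And>x. K (0,x) = x"
    using monoid.l_one[of "grp K"] cg by (simp add: grp_def comm_group_def comm_monoid_def)
  have Gi: "\<And>x. \<exists>y. K (y,x) = 0"
    using group.l_inv_ex[of "grp K"] cg by (simp add: grp_def comm_group_def)
  have cg': "comm_group (grp H')"
  proof (rule comm_groupI)
    fix x y z show "x \<otimes>\<^bsub>grp H'\<^esub> y \<otimes>\<^bsub>grp H'\<^esub> z = x \<otimes>\<^bsub>grp H'\<^esub> (y \<otimes>\<^bsub>grp H'\<^esub> z)"
      by (simp add: grp_def H'def si Gas)
  next
    fix x y show "x \<otimes>\<^bsub>grp H'\<^esub> y = y \<otimes>\<^bsub>grp H'\<^esub> x" by (simp add: grp_def H'def Gc)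
  next
    fix x show "\<one>\<^bsub>grp H'\<^esub> \<otimes>\<^bsub>grp H'\<^esub> x = x" by (simp add: grp_def H'def z Gl is')
  next
    fix x
    obtain y where "K (y, \<psi> x) = 0" using Gi by blast
    then have "inv_into UNIV \<psi> y \<otimes>\<^bsub>grp H'\<^esub> x = \<one>\<^bsub>grp H'\<^esub>" by (simp add: grp_def H'def si iz)
    then show "\<exists>y\<in>carrier (grp H'). y \<otimes>\<^bsub>grp H'\<^esub> x = \<one>\<^bsub>grp H'\<^esub>" by (auto simp: grp_def)
  qed (auto simp: grp_def)
  have hom: "\<psi> \<in> hom (grp H') (grp K)" by (simp add: hom_def grp_def H'def si)
  have iso: "\<psi> \<in> iso (grp H') (grp K)" using hom b by (simp add: iso_def grp_def)
  have tf: "\<forall>a n. a \<noteq> 0 \<and> n > 0 \<longrightarrow> a [^]\<^bsub>grp H'\<^esub> (n::nat) \<noteq> (0::nat)"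
  proof (intro allI impI)
    fix a :: nat and n :: nat assume an: "a \<noteq> 0 \<and> n > 0"
    have "\<psi> (a [^]\<^bsub>grp H'\<^esub> n) = (\<psi> a) [^]\<^bsub>grp K\<^esub> n"
      using hom_nat_pow[OF hom] cg cg' by (simp add: grp_def comm_group_def)
    moreover have "\<psi> a \<noteq> 0" using an z is' by metis
    ultimately have "\<psi> (a [^]\<^bsub>grp H'\<^esub> n) \<noteq> 0" using K an unfolding T_ops_def by auto
    then show "a [^]\<^bsub>grp H'\<^esub> n \<noteq> 0" using z by metis
  qed
  show ?thesis using cg' tf iso unfolding T_ops_def A_ops_def is_iso_def by auto
qed

theorem lemma2p10:
  fixes P S :: "(nat \<times> nat \<Rightarrow> nat) set"
  assumes "group_property P" and "group_property S"
    and "P \<subseteq> S" and "S \<subseteq> T_ops"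
    and hyp: "\<And>(k::nat) (m::nat \<Rightarrow> nat \<Rightarrow> nat).
      {G \<in> S. \<forall>i\<le>k. \<forall>j\<le>k. G (i, j) = m i j} \<noteq> {} \<Longrightarrow>
      (\<exists>G0 \<in> {G \<in> S. \<forall>i\<le>k. \<forall>j\<le>k. G (i, j) = m i j}. \<exists>H \<in> P. \<exists>\<phi>.
         \<phi> \<in> hom (grp G0) (grp H) \<and>
         inj_on \<phi> ({1..k} \<union> {m i j | i j. i \<le> k \<and> j \<le> k}))"
  shows "S \<subseteq> (subtopology op_topology S) closure_of P"
proof
  fix K assume GS: "K \<in> S"
  have top: "topspace (subtopology op_topology S) = S"
    by (simp add: op_topology_def)
  show "K \<in> (subtopology op_topology S) closure_of P"
    unfolding in_closure_of
  proof (intro conjI allI impI)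
    show "K \<in> topspace (subtopology op_topology S)" using top GS by simp
    fix T assume "K \<in> T \<and> openin (subtopology op_topology S) T"
    then obtain U where U: "openin op_topology U" "T = U \<inter> S" "K \<in> U"
      by (auto simp: openin_subtopology)
    obtain k where k: "\<And>H. (\<forall>i\<le>k. \<forall>j\<le>k. H (i,j) = K (i,j)) \<Longrightarrow> H \<in> U"
      using nbhd_lemma[OF U(1) U(3)] by blast
    define m where "m = (\<lambda>i j. K (i,j))"
    have "K \<in> {K \<in> S. \<forall>i\<le>k. \<forall>j\<le>k. K (i, j) = m i j}" using GS by (simp add: m_def)
    then obtain G0 H \<phi> where G0: "G0 \<in> S" "\<forall>i\<le>k. \<forall>j\<le>k. G0 (i, j) = m i j"
      and HP: "H \<in> P" and hom: "\<phi> \<in> hom (grp G0) (grp H)"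
      and inj: "inj_on \<phi> ({1..k} \<union> {m i j | i j. i \<le> k \<and> j \<le> k})"
      using hyp[of k m] by blast
    define D where "D = {1..k} \<union> {m i j | i j. i \<le> k \<and> j \<le> k}"
    have "{m i j | i j. i \<le> k \<and> j \<le> k} = (\<lambda>(i,j). m i j) ` ({..k} \<times> {..k})" by auto
    then have fD: "finite D" unfolding D_def by simp
    have cg0: "comm_group (grp G0)" using G0(1) assms(4) unfolding T_ops_def A_ops_def by auto
    have cgH: "comm_group (grp H)" using HP assms(1) unfolding group_property_def T_ops_def A_ops_def by auto
    have "G0 (0,0) = 0"
      using monoid.l_one[of "grp G0" 0] cg0 by (simp add: grp_def comm_group_def comm_monoid_def)
    then have "m 0 0 = 0" using G0(2) by auto
    then have z0: "0 \<in> D" unfolding D_def by (auto intro!: exI[of _ 0])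
    obtain \<psi> where psi: "bij \<psi>" "\<And>x. x \<in> D \<Longrightarrow> \<psi> x = \<phi> x"
      using extend_bij[OF fD] inj D_def by blast
    have gh: "group_hom (grp G0) (grp H) \<phi>"
      using cg0 cgH hom by (simp add: group_hom_def group_hom_axioms_def comm_group_def)
    have "\<phi> 0 = 0" using group_hom.hom_one[OF gh] by (simp add: grp_def)
    then have psi0: "\<psi> 0 = 0" using psi(2)[OF z0] by simp
    define H' where "H' = (\<lambda>(a,b). inv_into UNIV \<psi> (H (\<psi> a, \<psi> b)))"
    have HT: "H \<in> T_ops" using HP assms(1) unfolding group_property_def by auto
    have tr: "H' \<in> T_ops \<and> grp H' \<cong> grp H" by (rule transport[OF HT psi(1) psi0 H'_def])
    then have H'P: "H' \<in> P" using HP assms(1) unfolding group_property_def by blast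
    have is': "\<And>x. inv_into UNIV \<psi> (\<psi> x) = x" using psi(1) by (simp add: bij_is_inj)
    have "\<forall>i\<le>k. \<forall>j\<le>k. H' (i,j) = K (i,j)"
    proof (intro allI impI)
      fix i j assume ij: "i \<le> k" "j \<le> k"
      have iD: "i \<in> D" using ij z0 unfolding D_def by (cases "i = 0") auto
      have jD: "j \<in> D" using ij z0 unfolding D_def by (cases "j = 0") auto
      have mD: "m i j \<in> D" using ij unfolding D_def by blast
      have "H (\<phi> i, \<phi> j) = \<phi> (G0 (i,j))"
        using hom by (simp add: hom_def grp_def)
      then have "H (\<psi> i, \<psi> j) = \<psi> (m i j)" using psi(2) iD jD mD G0(2) ij by simp
      then show "H' (i,j) = K (i,j)" by (simp add: H'_def is' m_def)
    qed
    then have "H' \<in> U" using k by blast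
    then show "\<exists>y. y \<in> P \<and> y \<in> T" using H'P assms(3) U(2) by blast
  qed
qed

end
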